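(* Let $n\ge2$, $\preceq$ an admissible order on $L([0,1])$, $G\colon L([0,1])^n\to L([0,1])$ non-decreasing with $G(\mathbf0,\dots,\mathbf0)=\mathbf0$ and $G(\mathbf1,\dots,\mathbf1)=\mathbf1$, and $F\colon L([0,1])^2\to L([0,1])$ non-decreasing in the first variable with $F(\mathbf0,Y)=\mathbf0$ and $F(\mathbf1,Y)=\mathbf1$ for all $Y\in L([0,1])$. Then the IV Sugeno-like $FG$-functional $\mathbf S_m^{F,G}$ is an $n$-dimensional IV aggregation function w.r.t. $\preceq$ for every symmetric IV fuzzy measure $m$.
   Context: $N=\{1,\dots,n\}$. $L([0,1])=\{[a,b]:0\le a\le b\le1\}$, $\mathbf0=[0,0]$, $\mathbf1=[1,1]$. An admissible order $\preceq$ is a total order on $L([0,1])$ with $[a,b]\preceq[c,d]$ whenever $a\le c$, $b\le d$. Monotonicity is w.r.t. $\preceq$. An $n$-dimensional IV aggregation function w.r.t. $\preceq$ is $M\colon L([0,1])^n\to L([0,1])$ with $M(\mathbf0,\dots,\mathbf0)=\mathbf0$, $M(\mathbf1,\dots,\mathbf1)=\mathbf1$, non-decreasing in each component w.r.t. $\preceq$. An IV fuzzy measure w.r.t. $\preceq$ is $m\colon2^N\to L([0,1])$, $m(\emptyset)=\mathbf0$, $m(N)=\mathbf1$, $m(A)\preceq m(B)$ for $A\subseteq B$; symmetric if $m(A)=m(B)$ whenever $|A|=|B|$. For a permutation $\sigma$, $E_{\sigma(i)}=\{\sigma(i),\dots,\sigma(n)\}$. $\mathbf S_m^{F,G}(X_1,\dots,X_n)=G\big(F(X_{\sigma(1)},m(E_{\sigma(1)})),\dots,F(X_{\sigma(n)},m(E_{\sigma(n)}))\big)$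 with $\sigma$ any permutation such that $X_{\sigma(1)}\preceq\dots\preceq X_{\sigma(n)}$ (independent of the choice of $\sigma$ for symmetric $m$). *)

theory Defs
  imports Complex_Main "HOL-Library.FuncSet"
begin

text \<open>Closed subintervals [a,b] of [0,1] are represented as pairs (a,b).\<close>
type_synonym ival = "real \<times> real"

definition LI :: "ival set" where
  "LI = {(a, b). 0 \<le> a \<and> a \<le> b \<and> b \<le> 1}"

definition ival0 :: ival where "ival0 = (0, 0)"
definition ival1 :: ival where "ival1 = (1, 1)"

definition admissible_order :: "(ival \<Rightarrow> ival \<Rightarrow> bool) \<Rightarrow> bool" where
  "admissible_order le \<longleftrightarrow>
     (\<forall>x\<in>LI. le x x) \<and>
     (\<forall>x\<in>LI. \<forall>y\<in>LI. le x y \<and> le y x \<longrightarrow> x = y) \<and>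
     (\<forall>x\<in>LI. \<forall>y\<in>LI. \<forall>z\<in>LI. le x y \<and> le y z \<longrightarrow> le x z) \<and>
     (\<forall>x\<in>LI. \<forall>y\<in>LI. le x y \<or> le y x) \<and>
     (\<forall>a b c d. (a, b) \<in> LI \<and> (c, d) \<in> LI \<and> a \<le> c \<and> b \<le> d \<longrightarrow> le (a, b) (c, d))"

text \<open>Elements of L([0,1])^n are extensional functions on {1..n}.\<close>
definition ivecs :: "nat \<Rightarrow> (nat \<Rightarrow> ival) set" where
  "ivecs n = {1..n} \<rightarrow>\<^sub>E LI"

definition const_ivec :: "nat \<Rightarrow> ival \<Rightarrow> (nat \<Rightarrow> ival)" where
  "const_ivec n c = (\<lambda>i\<in>{1..n}. c)"

definition iv_aggregation :: "(ival \<Rightarrow> ival \<Rightarrow> bool) \<Rightarrow> nat \<Rightarrow> ((nat \<Rightarrow> ival) \<Rightarrow> ival) \<Rightarrow> bool" where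
  "iv_aggregation le n M \<longleftrightarrow>
     (\<forall>X\<in>ivecs n. M X \<in> LI) \<and>
     M (const_ivec n ival0) = ival0 \<and>
     M (const_ivec n ival1) = ival1 \<and>
     (\<forall>X\<in>ivecs n. \<forall>Y\<in>ivecs n. (\<forall>i\<in>{1..n}. le (X i) (Y i)) \<longrightarrow> le (M X) (M Y))"

definition iv_fuzzy_measure :: "(ival \<Rightarrow> ival \<Rightarrow> bool) \<Rightarrow> nat \<Rightarrow> (nat set \<Rightarrow> ival) \<Rightarrow> bool" where
  "iv_fuzzy_measure le n m \<longleftrightarrow>
     (\<forall>A. A \<subseteq> {1..n} \<longrightarrow> m A \<in> LI) \<and>
     m {} = ival0 \<and> m {1..n} = ival1 \<and>
     (\<forall>A B. A \<subseteq> B \<and> B \<subseteq> {1..n} \<longrightarrow> le (m A) (m B))"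

definition symmetric_measure :: "nat \<Rightarrow> (nat set \<Rightarrow> ival) \<Rightarrow> bool" where
  "symmetric_measure n m \<longleftrightarrow>
     (\<forall>A B. A \<subseteq> {1..n} \<and> B \<subseteq> {1..n} \<and> card A = card B \<longrightarrow> m A = m B)"

definition sorting_perm :: "(ival \<Rightarrow> ival \<Rightarrow> bool) \<Rightarrow> nat \<Rightarrow> (nat \<Rightarrow> ival) \<Rightarrow> (nat \<Rightarrow> nat) \<Rightarrow> bool" where
  "sorting_perm le n X \<sigma> \<longleftrightarrow>
     bij_betw \<sigma> {1..n} {1..n} \<and>
     (\<forall>i j. 1 \<le> i \<and> i \<le> j \<and> j \<le> n \<longrightarrow> le (X (\<sigma> i)) (X (\<sigma> j)))"

definition sugeno_FG ::
  "(ival \<Rightarrow> ival \<Rightarrow> bool) \<Rightarrow> nat \<Rightarrow> (nat set \<Rightarrow> ival) \<Rightarrow> (ival \<Rightarrow> ival \<Rightarrow> ival)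
     \<Rightarrow> ((nat \<Rightarrow> ival) \<Rightarrow> ival) \<Rightarrow> (nat \<Rightarrow> ival) \<Rightarrow> ival" where
  "sugeno_FG le n m F G X =
     (let \<sigma> = (SOME \<sigma>. sorting_perm le n X \<sigma>)
      in G (\<lambda>i\<in>{1..n}. F (X (\<sigma> i)) (m (\<sigma> ` {i..n}))))"

end

theory Submission
  imports Defs
begin

lemma max_ex:
  assumes "finite S" "S \<noteq> {}"
    and tot: "\<forall>x\<in>S. \<forall>y\<in>S. R x y \<or> R y x"
    and tr: "\<forall>x\<in>S. \<forall>y\<in>S. \<forall>z\<in>S. R x y \<and> R y z \<longrightarrow> R x z"
  shows "\<exists>s\<in>S. \<forall>x\<in>S. R x s"
  using assms(1,2) tot tr
proof (induction S rule: finite_ne_induct)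
  case (singleton x) then show ?case by blast
next
  case (insert x F)
  have totI: "R a b \<or> R b a" if "a \<in> insert x F" "b \<in> insert x F" for a b
    using insert.prems(1) that by blast
  have trI: "R a c" if "a \<in> insert x F" "b \<in> insert x F" "c \<in> insert x F" "R a b" "R b c" for a b c
    using insert.prems(2) that by blast
  have "\<forall>x\<in>F. \<forall>y\<in>F. R x y \<or> R y x" "\<forall>x\<in>F. \<forall>y\<in>F. \<forall>z\<in>F. R x y \<and> R y z \<longrightarrow> R x z"
    using insert.prems by blast+
  then obtain s where s: "s \<in> F" "\<forall>y\<in>F. R y s" using insert.IH by blast
  have xx: "R x x" using totI[of x x] by auto
  show ?case
  proof (cases "R s x")
    case True
    have "R y x" if "y \<in> insert x F" for y
    proof (cases "y = x")
      case True then show ?thesis using xx by simp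
    next
      case False
      then have "y \<in> F" using that by simp
      then show ?thesis using trI[of y s x] s \<open>R s x\<close> by simp
    qed
    then show ?thesis by blast
  next
    case False
    then have "R x s" using totI[of s x] s(1) by auto
    then have "R y s" if "y \<in> insert x F" for y using that s by blast
    then show ?thesis using s(1) by blast
  qed
qed

lemma sort_ex:
  assumes "finite S" "card S = n"
    and tot: "\<forall>x\<in>S. \<forall>y\<in>S. R x y \<or> R y x"
    and tr: "\<forall>x\<in>S. \<forall>y\<in>S. \<forall>z\<in>S. R x y \<and> R y z \<longrightarrow> R x z"
  shows "\<exists>\<sigma>. bij_betw \<sigma> {1..n} S \<and> (\<forall>i j. 1 \<le> i \<and> i \<le> j \<and> j \<le> n \<longrightarrow> R (\<sigma> i) (\<sigma> j))"
  using assms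
proof (induction n arbitrary: S)
  case 0
  have "S = {}" using "0.prems"(1,2) by simp
  then show ?case by (simp add: bij_betw_def)
next
  case (Suc n)
  have ne: "S \<noteq> {}" using Suc.prems(1,2) by auto
  obtain s where s: "s \<in> S" "\<forall>x\<in>S. R x s" using max_ex[OF Suc.prems(1) ne Suc.prems(3,4)] by blast
  let ?S = "S - {s}"
  have f1: "finite ?S" "card ?S = n" using Suc.prems(1,2) s(1) by auto
  have t1: "\<forall>x\<in>?S. \<forall>y\<in>?S. R x y \<or> R y x" "\<forall>x\<in>?S. \<forall>y\<in>?S. \<forall>z\<in>?S. R x y \<and> R y z \<longrightarrow> R x z"
    using Suc.prems(3,4) by blast+
  obtain \<sigma> where \<sigma>: "bij_betw \<sigma> {1..n} ?S"
    "\<forall>i j. 1 \<le> i \<and> i \<le> j \<and> j \<le> n \<longrightarrow> R (\<sigma> i) (\<sigma> j)"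
    using Suc.IH[OF f1 t1] by blast
  define \<tau> where "\<tau> = \<sigma>(Suc n := s)"
  have b1: "bij_betw \<tau> {1..n} ?S"
    using \<sigma>(1) by (rule bij_betw_cong[THEN iffD1, rotated]) (auto simp: \<tau>_def)
  have "bij_betw \<tau> ({1..n} \<union> {Suc n}) (?S \<union> {\<tau> (Suc n)})"
    using notIn_Un_bij_betw3[of "Suc n" "{1..n}" \<tau> ?S] b1 by (simp add: \<tau>_def)
  moreover have "{1..n} \<union> {Suc n} = {1..Suc n}" by auto
  moreover have "?S \<union> {\<tau> (Suc n)} = S" using s by (auto simp: \<tau>_def)
  ultimately have b: "bij_betw \<tau> {1..Suc n} S" by simp
  have "R (\<tau> i) (\<tau> j)" if "1 \<le> i" "i \<le> j" "j \<le> Suc n" for i j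
  proof (cases "j = Suc n")
    case True
    have "i \<in> {1..Suc n}" using that by simp
    then have "\<tau> i \<in> S" using bij_betw_apply[OF b] by blast
    then show ?thesis using True s by (simp add: \<tau>_def)
  next
    case False
    then show ?thesis using that \<sigma>(2)[rule_format, of i j] by (simp add: \<tau>_def)
  qed
  then show ?case using b by blast
qed

theorem corollary7:
  fixes le :: "ival \<Rightarrow> ival \<Rightarrow> bool" and n :: nat
    and G :: "(nat \<Rightarrow> ival) \<Rightarrow> ival" and F :: "ival \<Rightarrow> ival \<Rightarrow> ival"
    and m :: "nat set \<Rightarrow> ival"
  assumes "n \<ge> 2"
    and "admissible_order le"
    and "\<forall>X\<in>ivecs n. G X \<in> LI"
    and "\<forall>X\<in>ivecs n. \<forall>Y\<in>ivecs n. (\<forall>i\<in>{1..n}. le (X i) (Y i)) \<longrightarrow> le (G X) (G Y)"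
    and "G (const_ivec n ival0) = ival0"
    and "G (const_ivec n ival1) = ival1"
    and "\<forall>X\<in>LI. \<forall>Y\<in>LI. F X Y \<in> LI"
    and "\<forall>X\<in>LI. \<forall>X'\<in>LI. \<forall>Y\<in>LI. le X X' \<longrightarrow> le (F X Y) (F X' Y)"
    and "\<forall>Y\<in>LI. F ival0 Y = ival0"
    and "\<forall>Y\<in>LI. F ival1 Y = ival1"
    and "iv_fuzzy_measure le n m"
    and "symmetric_measure n m"
  shows "iv_aggregation le n (sugeno_FG le n m F G)"
proof -
  note adm = assms(2)[unfolded admissible_order_def]
  have tot: "\<forall>x\<in>LI. \<forall>y\<in>LI. le x y \<or> le y x" using adm by blast
  have tr: "\<forall>x\<in>LI. \<forall>y\<in>LI. \<forall>z\<in>LI. le x y \<and> le y z \<longrightarrow> le x z" using adm by blast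
  have trI: "le x z" if "x \<in> LI" "y \<in> LI" "z \<in> LI" "le x y" "le y z" for x y z
    using tr that by blast
  have FI: "F x y \<in> LI" if "x \<in> LI" "y \<in> LI" for x y using assms(7) that by blast
  have FM: "le (F x y) (F x' y)" if "x \<in> LI" "x' \<in> LI" "y \<in> LI" "le x x'" for x x' y
    using assms(8) that by blast
  have mLI: "m A \<in> LI" if "A \<subseteq> {1..n}" for A
    using assms(11) that unfolding iv_fuzzy_measure_def by blast
  have XLI: "X i \<in> LI" if "X \<in> ivecs n" "i \<in> {1..n}" for X i
    using that unfolding ivecs_def by auto
  define sig where "sig X = (SOME \<sigma>. sorting_perm le n X \<sigma>)" for X
  define V where "V X = (\<lambda>i\<in>{1..n}. F (X (sig X i)) (m (sig X ` {i..n})))" for X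
  have SV: "sugeno_FG le n m F G X = G (V X)" for X
    unfolding sugeno_FG_def V_def sig_def Let_def by simp
  have sigp: "sorting_perm le n X (sig X)" if "X \<in> ivecs n" for X
  proof -
    have "\<exists>\<sigma>. bij_betw \<sigma> {1..n} {1..n} \<and> (\<forall>i j. 1 \<le> i \<and> i \<le> j \<and> j \<le> n \<longrightarrow> (\<lambda>a b. le (X a) (X b)) (\<sigma> i) (\<sigma> j))"
      apply (rule sort_ex)
      subgoal by simp
      subgoal by simp
      subgoal using tot XLI[OF that] by blast
      subgoal using trI XLI[OF that] by blast
      done
    then have "\<exists>\<sigma>. sorting_perm le n X \<sigma>" unfolding sorting_perm_def by simp
    then show ?thesis unfolding sig_def by (rule someI_ex)
  qed
  have sigb: "bij_betw (sig X) {1..n} {1..n}" if "X \<in> ivecs n" for X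
    using sigp[OF that] unfolding sorting_perm_def by (rule conjunct1)
  have sigin: "sig X i \<in> {1..n}" if "X \<in> ivecs n" "i \<in> {1..n}" for X i
    using bij_betw_apply[OF sigb[OF that(1)] that(2)] .
  have sigsub: "sig X ` {i..n} \<subseteq> {1..n}" if "X \<in> ivecs n" "i \<in> {1..n}" for X i
  proof (rule image_subsetI)
    fix j assume "j \<in> {i..n}"
    then have "j \<in> {1..n}" using that(2) by simp
    then show "sig X j \<in> {1..n}" by (rule sigin[OF that(1)])
  qed
  have Vi: "V X i \<in> LI" if "X \<in> ivecs n" "i \<in> {1..n}" for X i
  proof -
    have "V X i = F (X (sig X i)) (m (sig X ` {i..n}))" unfolding V_def using that(2) by simp
    then show ?thesis using FI[OF XLI[OF that(1) sigin[OF that]] mLI[OF sigsub[OF that]]] by simp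
  qed
  have Vin: "V X \<in> ivecs n" if "X \<in> ivecs n" for X
    unfolding ivecs_def
  proof (rule PiE_I)
    fix i assume "i \<in> {1..n}" then show "V X i \<in> LI" by (rule Vi[OF that])
  next
    fix i assume ni: "i \<notin> {1..n}" then show "V X i = undefined" by (simp only: V_def restrict_apply if_not_P[OF ni] if_False)
  qed
  have cin: "const_ivec n c \<in> ivecs n" if "c \<in> LI" for c
    unfolding ivecs_def const_ivec_def using that by simp
  have c0: "ival0 \<in> LI" "ival1 \<in> LI" unfolding LI_def ival0_def ival1_def by auto
  have Vc: "V (const_ivec n c) = const_ivec n c" if c: "c \<in> LI" "\<forall>Y\<in>LI. F c Y = c" for c
  proof
    fix i show "V (const_ivec n c) i = const_ivec n c i"
    proof (cases "i \<in> {1..n}")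
      case True
      have e1: "const_ivec n c (sig (const_ivec n c) i) = c"
        using sigin[OF cin[OF c(1)] True] unfolding const_ivec_def by simp
      have e2: "F c (m (sig (const_ivec n c) ` {i..n})) = c"
        using c(2) mLI[OF sigsub[OF cin[OF c(1)] True]] by blast
      have "V (const_ivec n c) i = F (const_ivec n c (sig (const_ivec n c) i)) (m (sig (const_ivec n c) ` {i..n}))"
        unfolding V_def using True by (rule restrict_apply')
      also have "\<dots> = c" using e1 e2 by simp
      also have "c = const_ivec n c i" unfolding const_ivec_def using True by simp
      finally show ?thesis .
    next
      case False
      show ?thesis unfolding V_def const_ivec_def by (simp only: restrict_apply if_not_P[OF False] if_False)
    qed
  qed
  have V0: "V (const_ivec n ival0) = const_ivec n ival0" by (rule Vc[OF c0(1) assms(9)])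
  have V1: "V (const_ivec n ival1) = const_ivec n ival1" by (rule Vc[OF c0(2) assms(10)])
  have key: "le (X (sig X i)) (Y (sig Y i))"
    if XY: "X \<in> ivecs n" "Y \<in> ivecs n" "\<forall>k\<in>{1..n}. le (X k) (Y k)" and i: "i \<in> {1..n}" for X Y i
  proof -
    let ?s = "sig X" and ?t = "sig Y"
    have spX: "sorting_perm le n X ?s" using sigp[OF XY(1)] .
    have spY: "sorting_perm le n Y ?t" using sigp[OF XY(2)] .
    have bs: "bij_betw ?s {1..n} {1..n}" using sigb[OF XY(1)] .
    have bt: "bij_betw ?t {1..n} {1..n}" using sigb[OF XY(2)] .
    have ms: "\<forall>a b. 1 \<le> a \<and> a \<le> b \<and> b \<le> n \<longrightarrow> le (X (?s a)) (X (?s b))"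
      using spX unfolding sorting_perm_def by (rule conjunct2)
    have mt: "\<forall>a b. 1 \<le> a \<and> a \<le> b \<and> b \<le> n \<longrightarrow> le (Y (?t a)) (Y (?t b))"
      using spY unfolding sorting_perm_def by (rule conjunct2)
    let ?A = "?t ` {1..i}" and ?B = "?s ` {i..n}"
    have s1: "{1..i} \<subseteq> {1..n}" "{i..n} \<subseteq> {1..n}" using i by auto
    have cA: "card ?A = i"
      using card_image[OF inj_on_subset[OF bij_betw_imp_inj_on[OF bt] s1(1)]] by simp
    have cB: "card ?B = n + 1 - i"
      using card_image[OF inj_on_subset[OF bij_betw_imp_inj_on[OF bs] s1(2)]] by simp
    have "?A \<subseteq> ?t ` {1..n}" by (rule image_mono[OF s1(1)])
    moreover have "?B \<subseteq> ?s ` {1..n}" by (rule image_mono[OF s1(2)])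
    ultimately have sub: "?A \<union> ?B \<subseteq> {1..n}"
      using bij_betw_imp_surj_on[OF bs] bij_betw_imp_surj_on[OF bt] by simp
    have "?A \<inter> ?B \<noteq> {}"
    proof
      assume d: "?A \<inter> ?B = {}"
      have "card (?A \<union> ?B) = card ?A + card ?B" by (rule card_Un_disjoint) (use d in auto)
      moreover have "card (?A \<union> ?B) \<le> n" using card_mono[OF _ sub] by simp
      ultimately show False using cA cB i by auto
    qed
    then obtain a b where ab: "a \<in> {1..i}" "b \<in> {i..n}" "?t a = ?s b" by blast
    let ?k = "?s b"
    have b1: "b \<in> {1..n}" using ab(2) i by auto
    have kin: "?k \<in> {1..n}" using bij_betw_apply[OF bs b1] .
    have l1: "le (X (?s i)) (X ?k)" using ms[rule_format, of i b] ab(2) i by auto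
    have l2: "le (X ?k) (Y ?k)" using XY(3) kin by blast
    have l3: "le (Y ?k) (Y (?t i))" using mt[rule_format, of a i] ab(1,3) i by auto
    have l12: "le (X (?s i)) (Y ?k)"
      by (rule trI[OF XLI[OF XY(1) sigin[OF XY(1) i]] XLI[OF XY(1) kin] XLI[OF XY(2) kin] l1 l2])
    show ?thesis
      by (rule trI[OF XLI[OF XY(1) sigin[OF XY(1) i]] XLI[OF XY(2) kin] XLI[OF XY(2) sigin[OF XY(2) i]] l12 l3])
  qed
  have mono: "le (G (V X)) (G (V Y))"
    if XY: "X \<in> ivecs n" "Y \<in> ivecs n" "\<forall>k\<in>{1..n}. le (X k) (Y k)" for X Y
  proof -
    have "\<forall>i\<in>{1..n}. le (V X i) (V Y i)"
    proof
      fix i assume i: "i \<in> {1..n}"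
      have s2: "{i..n} \<subseteq> {1..n}" using i by auto
      have c1: "card (sig X ` {i..n}) = card (sig Y ` {i..n})"
        using card_image[OF inj_on_subset[OF bij_betw_imp_inj_on[OF sigb[OF XY(1)]] s2]]
          card_image[OF inj_on_subset[OF bij_betw_imp_inj_on[OF sigb[OF XY(2)]] s2]] by simp
      have eq: "m (sig X ` {i..n}) = m (sig Y ` {i..n})"
        using assms(12)[unfolded symmetric_measure_def, rule_format, OF conjI[OF sigsub[OF XY(1) i] conjI[OF sigsub[OF XY(2) i] c1]]] .
      have vx: "V X i = F (X (sig X i)) (m (sig X ` {i..n}))" unfolding V_def using i by (rule restrict_apply')
      have vy: "V Y i = F (Y (sig Y i)) (m (sig Y ` {i..n}))" unfolding V_def using i by (rule restrict_apply')
      show "le (V X i) (V Y i)"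
        unfolding vx vy eq
        by (rule FM[OF XLI[OF XY(1) sigin[OF XY(1) i]] XLI[OF XY(2) sigin[OF XY(2) i]] mLI[OF sigsub[OF XY(2) i]] key[OF XY i]])
    qed
    then show ?thesis using assms(4)[rule_format, OF Vin[OF XY(1)] Vin[OF XY(2)]] by blast
  qed
  have p1: "\<forall>X\<in>ivecs n. G (V X) \<in> LI"
  proof
    fix X assume "X \<in> ivecs n" then show "G (V X) \<in> LI" using assms(3) Vin by blast
  qed
  have p4: "\<forall>X\<in>ivecs n. \<forall>Y\<in>ivecs n. (\<forall>i\<in>{1..n}. le (X i) (Y i)) \<longrightarrow> le (G (V X)) (G (V Y))"
    using mono by blast
  show ?thesis
    unfolding iv_aggregation_def SV V0 V1 assms(5,6)
    using p1 p4 by blast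
qed

end
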